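(* Let $J_{\mathrm{SK}}\subseteq\mathbb{Z}\mathfrak{S}$ be the $\mathbb{Z}$-span of all $u-v$ with $u,v$ permutations of the same size satisfying $u\equiv_{\mathrm{SK}}v$. Then $J_{\mathrm{SK}}$ is a right ideal and a coideal of the Malvenuto–Reutenauer Hopf algebra $(\mathbb{Z}\mathfrak{S},*,\Delta)$. Consequently, $\mathsf{SPR}:=\mathbb{Z}\mathfrak{S}/J_{\mathrm{SK}}$ is a right $\mathsf{PR}$-module and a quotient coalgebra of $\mathsf{PR}$.
   Context: $\mathbb{Z}\mathfrak{S}=\bigoplus_{n\ge0}\mathbb{Z}\mathfrak{S}_n$, permutations viewed as words. For a word $w$ of length $n$ over a totally ordered alphabet, $\mathrm{alph}(w)$ is its set of letters and $\mathrm{st}(w)\in\mathfrak{S}_n$ is the permutation with $\mathrm{st}(w)(i)<\mathrm{st}(w)(j)$ iff $w_i<w_j$, or $w_i=w_j$ and $i<j$. For $I\subseteq[n]$, $w|_I$ is the subword of $w$ consisting of the letters in $I$. The product and coproduct are: for $w\in\mathfrak{S}_p$, $w'\in\mathfrak{S}_q$, $w*w'=\sum uv$ over all words $u,v$ with $\mathrm{alph}(u)\cup\mathrm{alph}(v)=[p+q]$, $\mathrm{st}(u)=w$, $\mathrm{st}(v)=w'$; and for $w\in\mathfrak{S}_n$, $\Delta(w)=\sum_{i=0}^n\mathrm{st}(w|_{[1,i]})\otimes\mathrm{st}(w|_{[i+1,n]})$. Knuth equivalence $\equiv_{\mathrm{K}}$ on $\mathfrak{S}_n$ is generated by (SK1)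 $\dots xzy\dots\sim\dots zxy\dots$ for $x<y<z$ and (SK2) $\dots yxz\dots\sim\dots yzx\dots$ for $x<y<z$ (adjacent letters). Shifted Knuth equivalence $\equiv_{\mathrm{SK}}$ is generated by (SK1), (SK2) and (SK3): $xy\cdots\sim yx\cdots$ when $x,y$ are the first two letters of the permutation. $J_{\mathrm{K}}$ is the $\mathbb{Z}$-span of $u-v$ with $u\equiv_{\mathrm{K}}v$; it is a Hopf ideal, and $\mathsf{PR}=\mathbb{Z}\mathfrak{S}/J_{\mathrm{K}}$ is the Poirier–Reutenauer Hopf algebra. Since $J_{\mathrm{K}}\subseteq J_{\mathrm{SK}}$, $\mathsf{SPR}$ is a quotient of $\mathsf{PR}$. *)

theory Defs
  imports Main
begin

text \<open>Elements of the free Z-module on words are integer-valued functions on nat lists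
(finite support required where relevant). Permutations of size n are words over 1..n.\<close>

definition is_perm :: "nat list \<Rightarrow> bool" where
  "is_perm w \<longleftrightarrow> distinct w \<and> set w = {1..length w}"

definition st :: "nat list \<Rightarrow> nat list" where
  "st w = map (\<lambda>i. Suc (card {j. j < length w \<and> (w!j < w!i \<or> (w!j = w!i \<and> j < i))})) [0..<length w]"

definition restr :: "nat list \<Rightarrow> nat set \<Rightarrow> nat list" where
  "restr w I = filter (\<lambda>x. x \<in> I) w"

definition supp :: "('a \<Rightarrow> int) \<Rightarrow> 'a set" where
  "supp f = {x. f x \<noteq> 0}"

definition ZS :: "(nat list \<Rightarrow> int) set" where
  "ZS = {f. finite (supp f) \<and> (\<forall>w. f w \<noteq> 0 \<longrightarrow> is_perm w)}"

definition bas :: "nat list \<Rightarrow> (nat list \<Rightarrow> int)" where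
  "bas w = (\<lambda>x. if x = w then 1 else 0)"

definition mult_basis :: "nat list \<Rightarrow> nat list \<Rightarrow> nat list \<Rightarrow> int" where
  "mult_basis w w' x = int (card {(u, v). u @ v = x \<and>
       set u \<union> set v = {1..length w + length w'} \<and> st u = w \<and> st v = w'})"

definition mult :: "(nat list \<Rightarrow> int) \<Rightarrow> (nat list \<Rightarrow> int) \<Rightarrow> (nat list \<Rightarrow> int)" where
  "mult f g = (\<lambda>x. \<Sum>w\<in>supp f. \<Sum>w'\<in>supp g. f w * g w' * mult_basis w w' x)"

text \<open>Coproduct of a basis element, as a function on pairs (basis of ZS \<otimes> ZS).\<close>
definition coprod_basis :: "nat list \<Rightarrow> nat list \<times> nat list \<Rightarrow> int" where
  "coprod_basis w p = (\<Sum>i\<in>{0..length w}.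
      if p = (st (restr w {1..i}), st (restr w {i+1..length w})) then 1 else 0)"

definition coprod :: "(nat list \<Rightarrow> int) \<Rightarrow> (nat list \<times> nat list \<Rightarrow> int)" where
  "coprod f = (\<lambda>p. \<Sum>w\<in>supp f. f w * coprod_basis w p)"

definition counit :: "(nat list \<Rightarrow> int) \<Rightarrow> int" where
  "counit f = f []"

definition tensor :: "('a \<Rightarrow> int) \<Rightarrow> ('b \<Rightarrow> int) \<Rightarrow> ('a \<times> 'b \<Rightarrow> int)" where
  "tensor f g = (\<lambda>(x, y). f x * g y)"

inductive_set zspan :: "('a \<Rightarrow> int) set \<Rightarrow> ('a \<Rightarrow> int) set" for S where
  zero: "(\<lambda>_. 0) \<in> zspan S"
| gen: "s \<in> S \<Longrightarrow> s \<in> zspan S"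
| add: "a \<in> zspan S \<Longrightarrow> b \<in> zspan S \<Longrightarrow> (\<lambda>x. a x + b x) \<in> zspan S"
| neg: "a \<in> zspan S \<Longrightarrow> (\<lambda>x. - a x) \<in> zspan S"

definition knuth_step :: "nat list \<Rightarrow> nat list \<Rightarrow> bool" where
  "knuth_step u v \<longleftrightarrow> (\<exists>a b x y z. x < y \<and> y < z \<and>
      ((u = a @ [x, z, y] @ b \<and> v = a @ [z, x, y] @ b) \<or>
       (u = a @ [y, x, z] @ b \<and> v = a @ [y, z, x] @ b)))"

definition shifted_step :: "nat list \<Rightarrow> nat list \<Rightarrow> bool" where
  "shifted_step u v \<longleftrightarrow> knuth_step u v \<or> (\<exists>x y c. u = x # y # c \<and> v = y # x # c)"

definition knuth_equiv :: "nat list \<Rightarrow> nat list \<Rightarrow> bool" where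
  "knuth_equiv = equivclp knuth_step"

definition sk_equiv :: "nat list \<Rightarrow> nat list \<Rightarrow> bool" where
  "sk_equiv = equivclp shifted_step"

definition J_K :: "(nat list \<Rightarrow> int) set" where
  "J_K = zspan {(\<lambda>x. bas u x - bas v x) | u v.
      is_perm u \<and> is_perm v \<and> length u = length v \<and> knuth_equiv u v}"

definition J_SK :: "(nat list \<Rightarrow> int) set" where
  "J_SK = zspan {(\<lambda>x. bas u x - bas v x) | u v.
      is_perm u \<and> is_perm v \<and> length u = length v \<and> sk_equiv u v}"

end

theory Submission
  imports Defs
begin


definition rank :: "nat set \<Rightarrow> nat \<Rightarrow> nat" where
  "rank S a = card {y\<in>S. y < a}"

definition ordf :: "nat set \<Rightarrow> nat \<Rightarrow> nat" where
  "ordf S = inv_into S (\<lambda>a. Suc (rank S a))"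

lemma rank_mono: "finite S \<Longrightarrow> a \<le> b \<Longrightarrow> rank S a \<le> rank S b"
  unfolding rank_def by (rule card_mono) auto

lemma rank_strict: "finite S \<Longrightarrow> a \<in> S \<Longrightarrow> a < b \<Longrightarrow> rank S a < rank S b"
  unfolding rank_def by (rule psubset_card_mono) auto

lemma rank_inj: "finite S \<Longrightarrow> inj_on (\<lambda>a. Suc (rank S a)) S"
proof (rule inj_onI)
  fix a b assume f: "finite S" and ab: "a \<in> S" "b \<in> S" "Suc (rank S a) = Suc (rank S b)"
  show "a = b"
  proof (rule ccontr)
    assume "a \<noteq> b"
    then have "a < b \<or> b < a" by auto
    then show False using rank_strict[OF f, of a b] rank_strict[OF f, of b a] ab by auto
  qed
qed

lemma rank_lt_card: "finite S \<Longrightarrow> a \<in> S \<Longrightarrow> rank S a < card S"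
  unfolding rank_def by (rule psubset_card_mono) auto

lemma rank_image: "finite S \<Longrightarrow> (\<lambda>a. Suc (rank S a)) ` S = {1..card S}"
proof -
  assume f: "finite S"
  have "(\<lambda>a. rank S a) ` S = {0..<card S}"
  proof (rule card_subset_eq)
    show "(\<lambda>a. rank S a) ` S \<subseteq> {0..<card S}" using rank_lt_card[OF f] by auto
    have "inj_on (\<lambda>a. rank S a) S" using rank_inj[OF f] by (auto simp: inj_on_def)
    then show "card ((\<lambda>a. rank S a) ` S) = card {0..<card S}" by (simp add: card_image)
  qed simp
  then have "Suc ` (\<lambda>a. rank S a) ` S = Suc ` {0..<card S}" by simp
  then show ?thesis by (simp add: image_image image_Suc_atLeastLessThan atLeastLessThanSuc_atLeastAtMost)
qed

lemma st_length[simp]: "length (st w) = length w"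
  by (simp add: st_def)

lemma st_distinct: "distinct w \<Longrightarrow> st w = map (\<lambda>a. Suc (rank (set w) a)) w"
proof (rule nth_equalityI)
  assume d: "distinct w"
  show "length (st w) = length (map (\<lambda>a. Suc (rank (set w) a)) w)" by simp
  fix i assume i: "i < length (st w)"
  have e: "{j. j < length w \<and> (w!j < w!i \<or> (w!j = w!i \<and> j < i))} = {j. j < length w \<and> w!j < w!i}"
    using d i by (auto simp: nth_eq_iff_index_eq)
  have "card {j. j < length w \<and> w!j < w!i} = card ((!) w ` {j. j < length w \<and> w!j < w!i})"
    by (rule card_image[symmetric]) (use d in \<open>auto simp: inj_on_def nth_eq_iff_index_eq\<close>)
  also have "(!) w ` {j. j < length w \<and> w!j < w!i} = {y\<in>set w. y < w!i}"
    by (auto simp: in_set_conv_nth)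
  finally show "st w ! i = map (\<lambda>a. Suc (rank (set w) a)) w ! i"
    using i by (simp add: st_def e rank_def)
qed

lemma st_is_perm: "distinct w \<Longrightarrow> is_perm (st w)"
  by (simp add: st_distinct is_perm_def distinct_map rank_inj rank_image distinct_card)

lemma rank_map: 
  assumes "finite S" "\<forall>a\<in>S. \<forall>b\<in>S. a < b \<longrightarrow> f a < f b" "a \<in> S"
  shows "rank (f ` S) (f a) = rank S a"
proof -
  have inj: "inj_on f S" using assms(2) by (auto simp: inj_on_def) (metis linorder_neqE_nat less_irrefl)
  have "{y \<in> f ` S. y < f a} = f ` {y\<in>S. y < a}"
  proof safe
    fix b assume b: "b \<in> S" "f b < f a"
    have "b < a"
    proof (rule ccontr)
      assume "\<not> b < a"
      then have "b = a \<or> a < b" by auto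
      then show False using b assms(2,3) by (metis less_irrefl less_asym)
    qed
    then show "f b \<in> f ` {y \<in> S. y < a}" using b by auto
  next
    fix b assume "b \<in> S" "b < a" then show "f b < f a" using assms(2,3) by auto
  qed auto
  then show ?thesis unfolding rank_def
    by (simp add: card_image inj_on_subset[OF inj])
qed

lemma st_map_mono:
  assumes d: "distinct v" and m: "\<forall>a\<in>set v. \<forall>b\<in>set v. a < b \<longrightarrow> f a < f b"
  shows "st (map f v) = st v"
proof -
  have inj: "inj_on f (set v)" using m by (auto simp: inj_on_def) (metis linorder_neqE_nat less_irrefl)
  have "distinct (map f v)" using d inj by (simp add: distinct_map)
  then show ?thesis using d m rank_map[of "set v" f]
    by (simp add: st_distinct)
qed

lemma st_perm: "is_perm v \<Longrightarrow> st v = v"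
proof -
  assume p: "is_perm v"
  have "\<And>a. a \<in> set v \<Longrightarrow> Suc (rank (set v) a) = a"
  proof -
    fix a assume "a \<in> set v"
    then have a: "1 \<le> a" "a \<le> length v" using p by (auto simp: is_perm_def)
    have "{y \<in> set v. y < a} = {1..<a}" using p a by (auto simp: is_perm_def)
    then show "Suc (rank (set v) a) = a" using a by (simp add: rank_def)
  qed
  then have "map (\<lambda>a. Suc (rank (set v) a)) v = v" by (rule map_idI)
  then show ?thesis using p by (simp add: st_distinct is_perm_def)
qed

lemma lift_facts:
  assumes d: "distinct u" and pv: "is_perm v" and lv: "length v = length u"
  defines "g \<equiv> ordf (set u)"
  shows "map g (st u) = u" "set (map g v) = set u" "distinct (map g v)"
    "\<forall>i\<in>set v. \<forall>j\<in>set v. i < j \<longrightarrow> g i < g j"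
    "set v = set (st u)"
proof -
  let ?S = "set u" let ?h = "\<lambda>a. Suc (rank ?S a)"
  have f: "finite ?S" by simp
  have inj: "inj_on ?h ?S" by (rule rank_inj[OF f])
  have sv: "set v = ?h ` ?S" using pv lv rank_image[OF f] d
    by (simp add: is_perm_def distinct_card)
  show "set v = set (st u)" using sv d by (simp add: st_distinct)
  have gh: "\<And>a. a \<in> ?S \<Longrightarrow> g (?h a) = a" unfolding g_def ordf_def
    by (rule inv_into_f_f[OF inj])
  show "map g (st u) = u" using d gh by (simp add: st_distinct map_idI)
  show "set (map g v) = set u" using sv gh by force
  have "inj_on g (set v)" unfolding g_def ordf_def using sv by (simp add: inj_on_inv_into)
  then show "distinct (map g v)" using pv by (simp add: distinct_map is_perm_def)
  show "\<forall>i\<in>set v. \<forall>j\<in>set v. i < j \<longrightarrow> g i < g j"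
  proof (intro ballI impI)
    fix i j assume "i \<in> set v" "j \<in> set v" "i < j"
    then obtain a b where ab: "a \<in> ?S" "b \<in> ?S" "i = ?h a" "j = ?h b" "i < j" using sv by auto
    have "a < b"
    proof (rule ccontr)
      assume "\<not> a < b" then have "b \<le> a" by simp
      then have "rank ?S b \<le> rank ?S a" by (rule rank_mono[OF f])
      then show False using ab by simp
    qed
    then show "g i < g j" using ab gh by simp
  qed
qed

lemma knuth_step_map:
  assumes "knuth_step u v" "\<forall>a\<in>set u. \<forall>b\<in>set u. a < b \<longrightarrow> f a < f b"
  shows "knuth_step (map f u) (map f v)"
proof -
  obtain a b x y z where xyz: "x < y" "y < z" and
    c: "(u = a @ [x, z, y] @ b \<and> v = a @ [z, x, y] @ b) \<or>
       (u = a @ [y, x, z] @ b \<and> v = a @ [y, z, x] @ b)"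
    using assms(1) unfolding knuth_step_def by blast
  have "x \<in> set u" "y \<in> set u" "z \<in> set u" using c by auto
  then have m: "f x < f y" "f y < f z" using assms(2) xyz by auto
  show ?thesis unfolding knuth_step_def
    by (rule exI[of _ "map f a"], rule exI[of _ "map f b"], rule exI[of _ "f x"],
        rule exI[of _ "f y"], rule exI[of _ "f z"]) (use c m in auto)
qed

lemma shifted_step_map:
  assumes "shifted_step u v" "\<forall>a\<in>set u. \<forall>b\<in>set u. a < b \<longrightarrow> f a < f b"
  shows "shifted_step (map f u) (map f v)"
  using assms knuth_step_map unfolding shifted_step_def by fastforce

lemma knuth_step_props:
  assumes "knuth_step u v"
  shows "set v = set u" "length v = length u" "distinct v = distinct u"
  using assms unfolding knuth_step_def by auto

lemma shifted_step_props:
  assumes "shifted_step u v"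
  shows "set v = set u" "length v = length u" "distinct v = distinct u"
  using assms knuth_step_props unfolding shifted_step_def by auto

lemma knuth_step_app:
  assumes "knuth_step u v"
  shows "knuth_step (c @ u) (c @ v)" "knuth_step (u @ c) (v @ c)"
proof -
  obtain a b x y z where xyz: "x < y" "y < z" and
    cc: "(u = a @ [x, z, y] @ b \<and> v = a @ [z, x, y] @ b) \<or>
       (u = a @ [y, x, z] @ b \<and> v = a @ [y, z, x] @ b)"
    using assms(1) unfolding knuth_step_def by blast
  show "knuth_step (c @ u) (c @ v)" unfolding knuth_step_def
    by (rule exI[of _ "c @ a"], rule exI[of _ b]) (use cc xyz in auto)
  show "knuth_step (u @ c) (v @ c)" unfolding knuth_step_def
    by (rule exI[of _ a], rule exI[of _ "b @ c"]) (use cc xyz in auto)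
qed

lemma shifted_step_app:
  assumes "shifted_step u v"
  shows "shifted_step (u @ c) (v @ c)"
  using assms knuth_step_app unfolding shifted_step_def by fastforce

lemma knuth_shifted: "knuth_step u v \<Longrightarrow> shifted_step u v"
  unfolding shifted_step_def by simp

lemma equivclp_hom:
  assumes "equivclp R a b" "\<And>u v. R u v \<Longrightarrow> Q (h u) (h v)"
  shows "equivclp Q (h a) (h b)"
  using assms(1)
proof (induction rule: equivclp_induct)
  case base then show ?case by simp
next
  case (step y z)
  then show ?case using assms(2)
    by (meson equivclp_def converse_r_into_equivclp r_into_equivclp transp_equivclp transpD)
qed

lemma equivclp_map_inv:
  assumes "equivclp R a b" "\<And>u v. R u v \<Longrightarrow> set v = set u"
    "\<And>u v. R u v \<Longrightarrow> set u = S \<Longrightarrow> R (map f u) (map f v)" "set a = S"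
  shows "equivclp R (map f a) (map f b) \<and> set b = S"
  using assms(1)
proof (induction rule: equivclp_induct)
  case base then show ?case using assms(4) by simp
next
  case (step y z)
  then have sy: "set y = S" by simp
  show ?case
  proof (cases "R y z")
    case True
    then have "R (map f y) (map f z)" "set z = S" using assms(2,3) sy by auto
    then show ?thesis using step
      by (meson r_into_equivclp transp_equivclp transpD)
  next
    case False
    then have R: "R z y" using step by simp
    then have sz: "set z = S" using assms(2) sy by auto
    then have "R (map f z) (map f y)" using assms(3) R by auto
    then show ?thesis using step sz
      by (meson converse_r_into_equivclp transp_equivclp transpD)
  qed
qed

definition Aset :: "nat list \<Rightarrow> nat list \<Rightarrow> nat list set" where
  "Aset w w' = {x. is_perm x \<and> length x = length w + length w' \<and>
     st (take (length w) x) = w \<and> st (drop (length w) x) = w'}"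

lemma mb_ind: "mult_basis w w' x = (if x \<in> Aset w w' then 1 else 0)"
proof -
  let ?N = "length w + length w'"
  let ?P = "{(u, v). u @ v = x \<and> set u \<union> set v = {1..?N} \<and> st u = w \<and> st v = w'}"
  show ?thesis
  proof (cases "x \<in> Aset w w'")
    case True
    then have x: "is_perm x" "length x = ?N" "st (take (length w) x) = w" "st (drop (length w) x) = w'"
      by (auto simp: Aset_def)
    have s1: "?P \<subseteq> {(take (length w) x, drop (length w) x)}"
    proof (rule subsetI)
      fix p assume "p \<in> ?P"
      then obtain u v where uv: "p = (u, v)" "u @ v = x" "st u = w" by auto
      then have "length u = length w" by (metis st_length)
      then show "p \<in> {(take (length w) x, drop (length w) x)}" using uv by auto
    qed
    have "set (take (length w) x) \<union> set (drop (length w) x) = {1..?N}"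
      using x by (metis append_take_drop_id is_perm_def set_append)
    then have "(take (length w) x, drop (length w) x) \<in> ?P" using x by simp
    then have "?P = {(take (length w) x, drop (length w) x)}" using s1 by blast
    then show ?thesis using True by (simp add: mult_basis_def)
  next
    case False
    have h: "?P = {}"
    proof (rule ccontr)
      assume "?P \<noteq> {}"
      then obtain u v where a: "u @ v = x" "set u \<union> set v = {1..?N}" "st u = w" "st v = w'" by blast
      then have lu: "length u = length w" "length v = length w'" by (metis st_length)+
      then have lx: "length x = ?N" using a by auto
      have sx: "set x = {1..length x}" using a lx by auto
      then have "distinct x" using lx by (simp add: card_distinct)
      then have px: "is_perm x" unfolding is_perm_def using sx by simp
      have "take (length w) x = u" "drop (length w) x = v" using a(1) lu(1) by auto
      then have "x \<in> Aset w w'" unfolding Aset_def using px lx a(3,4) by simp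
      then show False using False by simp
    qed
    show ?thesis using False by (simp only: mult_basis_def h card.empty of_nat_0 if_False)
  qed
qed

lemma Aset_finite: "finite (Aset w w')"
proof -
  let ?N = "length w + length w'"
  have "Aset w w' \<subseteq> {xs. set xs \<subseteq> {1..?N} \<and> length xs = ?N}"
  proof (rule subsetI)
    fix x assume "x \<in> Aset w w'"
    then have "set x = {1..length x}" "length x = ?N" unfolding Aset_def is_perm_def by blast+
    then show "x \<in> {xs. set xs \<subseteq> {1..?N} \<and> length xs = ?N}" by simp
  qed
  then show ?thesis by (rule finite_subset) (simp add: finite_lists_length_eq)
qed

lemma zspan_sum:
  assumes "finite A" "\<forall>a\<in>A. F a \<in> zspan S"
  shows "(\<lambda>x. \<Sum>a\<in>A. F a x) \<in> zspan S"
  using assms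
proof (induction A rule: finite_induct)
  case empty then show ?case by (simp add: zspan.zero)
next
  case (insert a A)
  then have "(\<lambda>x. F a x + (\<Sum>a\<in>A. F a x)) \<in> zspan S"
    using zspan.add[of "F a" S "\<lambda>x. \<Sum>a\<in>A. F a x"] by auto
  then show ?case using insert by simp
qed

lemma zspan_smult:
  assumes "f \<in> zspan S"
  shows "(\<lambda>x. c * f x) \<in> zspan S"
proof -
  have nat: "(\<lambda>x. int n * f x) \<in> zspan S" for n
  proof (induction n)
    case 0 then show ?case by (simp add: zspan.zero)
  next
    case (Suc n)
    then have "(\<lambda>x. f x + int n * f x) \<in> zspan S" by (rule zspan.add[OF assms])
    then show ?case by (simp add: algebra_simps)
  qed
  show ?thesis
  proof (cases c rule: int_cases)
    case (nonneg n) then show ?thesis using nat by simp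
  next
    case (neg n)
    have "(\<lambda>x. - (int (Suc n) * f x)) \<in> zspan S" by (rule zspan.neg[OF nat])
    moreover have "(\<lambda>x. - (int (Suc n) * f x)) = (\<lambda>x. c * f x)"
      using neg by (intro ext) (simp add: ring_distribs)
    ultimately show ?thesis by simp
  qed
qed

lemma zspan_diff:
  assumes "a \<in> zspan S" "b \<in> zspan S"
  shows "(\<lambda>x. a x - b x) \<in> zspan S"
proof -
  have "(\<lambda>x. a x + (\<lambda>x. - b x) x) \<in> zspan S" by (rule zspan.add[OF assms(1) zspan.neg[OF assms(2)]])
  then show ?thesis by simp
qed

lemma gen_J_SK:
  "is_perm u \<Longrightarrow> is_perm v \<Longrightarrow> length u = length v \<Longrightarrow> sk_equiv u v \<Longrightarrow>
   (\<lambda>x. bas u x - bas v x) \<in> J_SK"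
  unfolding J_SK_def by (rule zspan.gen) blast

lemma bij_diff:
  assumes fA: "finite A" and bij: "bij_betw \<Psi> A B"
    and h: "\<forall>x\<in>A. is_perm x \<and> is_perm (\<Psi> x) \<and> length (\<Psi> x) = length x \<and> sk_equiv x (\<Psi> x)"
  shows "(\<lambda>y. (if y \<in> A then 1 else 0) - (if y \<in> B then 1 else 0) :: int) \<in> J_SK"
proof -
  have "(\<lambda>y. \<Sum>x\<in>A. (\<lambda>x y. bas x y - bas (\<Psi> x) y) x y) \<in> J_SK"
    unfolding J_SK_def
    by (rule zspan_sum[OF fA]) (use h gen_J_SK in \<open>auto simp: J_SK_def\<close>)
  moreover have "(\<Sum>x\<in>A. bas x y - bas (\<Psi> x) y) =
      (if y \<in> A then 1 else 0) - (if y \<in> B then 1 else 0)" for y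
  proof -
    have "(\<Sum>x\<in>A. bas (\<Psi> x) y) = (\<Sum>z\<in>B. bas z y)"
      by (rule sum.reindex_bij_betw[OF bij])
    moreover have "(\<Sum>z\<in>B. bas z y) = (if y \<in> B then 1 else 0)"
      using bij_betw_finite[OF bij] fA unfolding bas_def by (simp add: sum.delta)
    moreover have "(\<Sum>z\<in>A. bas z y) = (if y \<in> A then 1 else 0)"
      using fA unfolding bas_def by (simp add: sum.delta)
    ultimately show ?thesis by (simp add: sum_subtractf)
  qed
  ultimately show ?thesis by simp
qed

definition Rmap :: "nat list \<Rightarrow> nat list \<Rightarrow> nat list \<Rightarrow> nat list" where
  "Rmap m v x = map (ordf (set (take (length m) x))) v @ drop (length m) x"

definition Lmap :: "nat list \<Rightarrow> nat list \<Rightarrow> nat list \<Rightarrow> nat list" where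
  "Lmap w v x = take (length w) x @ map (ordf (set (drop (length w) x))) v"

lemma right_map:
  assumes x: "x \<in> Aset m w'" and pv: "is_perm v" and lv: "length v = length m"
  shows "Rmap m v x \<in> Aset v w'" "Rmap v m (Rmap m v x) = x"
    "sk_equiv m v \<Longrightarrow> sk_equiv x (Rmap m v x)"
    "is_perm x" "is_perm (Rmap m v x)" "length (Rmap m v x) = length x"
proof -
  let ?p = "length m"
  define u where "u = take ?p x"
  define c where "c = drop ?p x"
  define g where "g = ordf (set u)"
  have px: "is_perm x" and lx: "length x = ?p + length w'" and su: "st u = m" and sc: "st c = w'"
    using x unfolding Aset_def u_def c_def by auto
  show "is_perm x" by (rule px)
  have xuc: "x = u @ c" unfolding u_def c_def by simp
  have dx: "distinct x" using px by (simp add: is_perm_def)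
  then have du: "distinct u" and dc: "distinct c" and disj: "set u \<inter> set c = {}"
    using xuc by auto
  have lu: "length u = ?p" using lx unfolding u_def by simp
  have lvu: "length v = length u" using lu lv by simp
  note L = lift_facts[OF du pv lvu, folded g_def]
  have mg: "map g m = u" using L(1) su by simp
  have Rx: "Rmap m v x = map g v @ c" unfolding Rmap_def g_def u_def c_def by simp
  have lR: "length (Rmap m v x) = length x" using Rx lvu xuc by simp
  show "length (Rmap m v x) = length x" by (rule lR)
  have dR: "distinct (map g v @ c)" using L(3) dc disj L(2) by auto
  have sR: "set (map g v @ c) = set x" using L(2) xuc by auto
  have pR: "is_perm (Rmap m v x)" using dR sR lR px Rx by (simp add: is_perm_def)
  show "is_perm (Rmap m v x)" by (rule pR)
  have dv: "distinct v" using pv by (simp add: is_perm_def)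
  have stv: "st (map g v) = v" using st_map_mono[OF dv L(4)] st_perm[OF pv] by simp
  have tk: "take (length v) (Rmap m v x) = map g v" "drop (length v) (Rmap m v x) = c"
    using Rx by simp_all
  show "Rmap m v x \<in> Aset v w'"
    unfolding Aset_def using tk stv sc pR lR lx lv by simp
  have "Rmap v m (Rmap m v x) = map (ordf (set (take (length v) (Rmap m v x)))) m @ drop (length v) (Rmap m v x)"
    by (rule Rmap_def)
  also have "\<dots> = map (ordf (set (map g v))) m @ c" using tk by simp
  also have "\<dots> = x" using L(2) mg xuc g_def by simp
  finally show "Rmap v m (Rmap m v x) = x" .
  assume sk: "sk_equiv m v"
  have smv: "set m = set v" using L(5) su by simp
  have "equivclp shifted_step (map g m) (map g v) \<and> set v = set m"
  proof (rule equivclp_map_inv[where S = "set m"])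
    show "equivclp shifted_step m v" using sk by (simp add: sk_equiv_def)
    show "\<And>u v. shifted_step u v \<Longrightarrow> set v = set u" by (rule shifted_step_props(1))
    show "\<And>u' v'. shifted_step u' v' \<Longrightarrow> set u' = set m \<Longrightarrow> shifted_step (map g u') (map g v')"
      using shifted_step_map L(4) smv by metis
  qed simp
  then have "equivclp shifted_step (map g m) (map g v)" by simp
  then have "equivclp shifted_step ((\<lambda>w. w @ c) (map g m)) ((\<lambda>w. w @ c) (map g v))"
    by (rule equivclp_hom) (rule shifted_step_app)
  then show "sk_equiv x (Rmap m v x)" using Rx mg xuc by (simp add: sk_equiv_def)
qed

lemma left_map:
  assumes x: "x \<in> Aset w u0" and pv: "is_perm v" and lv: "length v = length u0"
  shows "Lmap w v x \<in> Aset w v" "Lmap w u0 (Lmap w v x) = x"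
    "knuth_equiv u0 v \<Longrightarrow> sk_equiv x (Lmap w v x)"
    "is_perm x" "is_perm (Lmap w v x)" "length (Lmap w v x) = length x"
proof -
  let ?p = "length w"
  define a where "a = take ?p x"
  define c where "c = drop ?p x"
  define g where "g = ordf (set c)"
  have px: "is_perm x" and lx: "length x = ?p + length u0" and sa: "st a = w" and sc: "st c = u0"
    using x unfolding Aset_def a_def c_def by auto
  show "is_perm x" by (rule px)
  have xac: "x = a @ c" unfolding a_def c_def by simp
  have dx: "distinct x" using px by (simp add: is_perm_def)
  then have da: "distinct a" and dc: "distinct c" and disj: "set a \<inter> set c = {}"
    using xac by auto
  have la: "length a = ?p" using lx unfolding a_def by simp
  have lc: "length c = length u0" using lx unfolding c_def by simp
  have lvc: "length v = length c" using lc lv by simp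
  note L = lift_facts[OF dc pv lvc, folded g_def]
  have mg: "map g u0 = c" using L(1) sc by simp
  have Lx: "Lmap w v x = a @ map g v" unfolding Lmap_def g_def a_def c_def by simp
  have lL: "length (Lmap w v x) = length x" using Lx lvc xac by simp
  show "length (Lmap w v x) = length x" by (rule lL)
  have dL: "distinct (a @ map g v)" using L(3) da disj L(2) by auto
  have sL: "set (a @ map g v) = set x" using L(2) xac by auto
  have pL: "is_perm (Lmap w v x)" using dL sL lL px Lx by (simp add: is_perm_def)
  show "is_perm (Lmap w v x)" by (rule pL)
  have dv: "distinct v" using pv by (simp add: is_perm_def)
  have stv: "st (map g v) = v" using st_map_mono[OF dv L(4)] st_perm[OF pv] by simp
  have tk: "take ?p (Lmap w v x) = a" "drop ?p (Lmap w v x) = map g v"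
    using Lx la by simp_all
  show "Lmap w v x \<in> Aset w v"
    unfolding Aset_def using tk stv sa pL lL lx lv by simp
  have "Lmap w u0 (Lmap w v x) = take ?p (Lmap w v x) @ map (ordf (set (drop ?p (Lmap w v x)))) u0"
    by (rule Lmap_def)
  also have "\<dots> = a @ map (ordf (set (map g v))) u0" using tk by simp
  also have "\<dots> = x" using L(2) mg xac g_def by simp
  finally show "Lmap w u0 (Lmap w v x) = x" .
  assume ke: "knuth_equiv u0 v"
  have smv: "set u0 = set v" using L(5) sc by simp
  have "equivclp knuth_step (map g u0) (map g v) \<and> set v = set u0"
  proof (rule equivclp_map_inv[where S = "set u0"])
    show "equivclp knuth_step u0 v" using ke by (simp add: knuth_equiv_def)
    show "\<And>u v. knuth_step u v \<Longrightarrow> set v = set u" by (rule knuth_step_props(1))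
    show "\<And>u' v'. knuth_step u' v' \<Longrightarrow> set u' = set u0 \<Longrightarrow> knuth_step (map g u') (map g v')"
      using knuth_step_map L(4) smv by metis
  qed simp
  then have "equivclp knuth_step (map g u0) (map g v)" by simp
  then have "equivclp shifted_step ((\<lambda>w. a @ w) (map g u0)) ((\<lambda>w. a @ w) (map g v))"
    by (rule equivclp_hom) (rule knuth_shifted, rule knuth_step_app(1))
  then show "sk_equiv x (Lmap w v x)" using Lx mg xac by (simp add: sk_equiv_def)
qed

lemma mb_right:
  assumes "is_perm m" "is_perm v" "length m = length v" "sk_equiv m v"
  shows "(\<lambda>x. mult_basis m w' x - mult_basis v w' x) \<in> J_SK"
proof -
  have bij: "bij_betw (Rmap m v) (Aset m w') (Aset v w')"
    by (rule bij_betw_byWitness[where f' = "Rmap v m"])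
       (use right_map[of _ m w' v] right_map[of _ v w' m] assms in auto)
  have "(\<lambda>y. (if y \<in> Aset m w' then 1 else 0) - (if y \<in> Aset v w' then 1 else 0) :: int) \<in> J_SK"
    by (rule bij_diff[OF Aset_finite bij]) (use right_map[of _ m w' v] assms in auto)
  then show ?thesis by (simp add: mb_ind)
qed

lemma mb_left:
  assumes "is_perm u" "is_perm v" "length u = length v" "knuth_equiv u v"
  shows "(\<lambda>x. mult_basis w u x - mult_basis w v x) \<in> J_SK"
proof -
  have bij: "bij_betw (Lmap w v) (Aset w u) (Aset w v)"
    by (rule bij_betw_byWitness[where f' = "Lmap w u"])
       (use left_map[of _ w u v] left_map[of _ w v u] assms in auto)
  have "(\<lambda>y. (if y \<in> Aset w u then 1 else 0) - (if y \<in> Aset w v then 1 else 0) :: int) \<in> J_SK"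
    by (rule bij_diff[OF Aset_finite bij]) (use left_map[of _ w u v] assms in auto)
  then show ?thesis by (simp add: mb_ind)
qed

lemma J_SK_sum:
  assumes "finite A" "\<forall>a\<in>A. F a \<in> J_SK"
  shows "(\<lambda>x. \<Sum>a\<in>A. F a x) \<in> J_SK"
  using zspan_sum assms unfolding J_SK_def by blast

lemma J_SK_smult: "f \<in> J_SK \<Longrightarrow> (\<lambda>x. c * f x) \<in> J_SK"
  using zspan_smult unfolding J_SK_def by blast

lemma zspan_fin:
  assumes "\<forall>s\<in>S. finite (supp s)" "f \<in> zspan S"
  shows "finite (supp f)"
  using assms(2)
proof (induction rule: zspan.induct)
  case zero then show ?case by (simp add: supp_def)
next
  case (gen s) then show ?case using assms(1) by simp
next
  case (add a b)
  have "supp (\<lambda>x. a x + b x) \<subseteq> supp a \<union> supp b" by (auto simp: supp_def)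
  then show ?case using add by (meson finite_UnI finite_subset)
next
  case (neg a)
  have "supp (\<lambda>x. - a x) = supp a" by (auto simp: supp_def)
  then show ?case using neg by simp
qed

lemma supp_bas_diff: "supp (\<lambda>x. bas u x - bas v x) \<subseteq> {u, v}"
  by (auto simp: supp_def bas_def)

lemma J_SK_fin: "f \<in> J_SK \<Longrightarrow> finite (supp f)"
  unfolding J_SK_def
  by (rule zspan_fin[rotated]) (auto intro: finite_subset[OF supp_bas_diff])

lemma J_K_fin: "f \<in> J_K \<Longrightarrow> finite (supp f)"
  unfolding J_K_def
  by (rule zspan_fin[rotated]) (auto intro: finite_subset[OF supp_bas_diff])

lemma sum_supp:
  assumes "finite S" "supp f \<subseteq> S"
  shows "(\<Sum>w\<in>supp f. f w * F w) = (\<Sum>w\<in>S. f w * F w)"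
  by (rule sum.mono_neutral_left) (use assms in \<open>auto simp: supp_def\<close>)

lemma mult_eq1:
  assumes "finite S" "supp f \<subseteq> S"
  shows "mult f g x = (\<Sum>w\<in>S. f w * (\<Sum>w'\<in>supp g. g w' * mult_basis w w' x))"
proof -
  have "mult f g x = (\<Sum>w\<in>supp f. f w * (\<Sum>w'\<in>supp g. g w' * mult_basis w w' x))"
    unfolding mult_def by (simp add: sum_distrib_left mult.assoc)
  also have "\<dots> = (\<Sum>w\<in>S. f w * (\<Sum>w'\<in>supp g. g w' * mult_basis w w' x))"
    by (rule sum_supp[OF assms])
  finally show ?thesis .
qed

lemma mult_eq2:
  assumes "finite S" "supp g \<subseteq> S"
  shows "mult f g x = (\<Sum>w'\<in>S. g w' * (\<Sum>w\<in>supp f. f w * mult_basis w w' x))"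
proof -
  have "mult f g x = (\<Sum>w'\<in>supp g. \<Sum>w\<in>supp f. f w * g w' * mult_basis w w' x)"
    unfolding mult_def by (rule sum.swap)
  also have "\<dots> = (\<Sum>w'\<in>supp g. g w' * (\<Sum>w\<in>supp f. f w * mult_basis w w' x))"
    by (simp add: sum_distrib_left algebra_simps)
  also have "\<dots> = (\<Sum>w'\<in>S. g w' * (\<Sum>w\<in>supp f. f w * mult_basis w w' x))"
    by (rule sum_supp[OF assms])
  finally show ?thesis .
qed

lemma supp_add: "supp (\<lambda>x. a x + b x) \<subseteq> supp a \<union> supp b"
  by (auto simp: supp_def)

lemma supp_neg: "supp (\<lambda>x. - a x) = supp a"
  by (auto simp: supp_def)

lemma mult_add1:
  assumes "finite (supp a)" "finite (supp b)"
  shows "mult (\<lambda>x. a x + b x) g = (\<lambda>x. mult a g x + mult b g x)"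
proof
  fix x
  let ?S = "supp a \<union> supp b"
  have f: "finite ?S" using assms by simp
  let ?F = "\<lambda>w. (\<Sum>w'\<in>supp g. g w' * mult_basis w w' x)"
  have e1: "mult (\<lambda>x. a x + b x) g x = (\<Sum>w\<in>?S. (a w + b w) * ?F w)"
    by (rule mult_eq1[OF f supp_add])
  have e2: "mult a g x = (\<Sum>w\<in>?S. a w * ?F w)" by (rule mult_eq1[OF f]) auto
  have e3: "mult b g x = (\<Sum>w\<in>?S. b w * ?F w)" by (rule mult_eq1[OF f]) auto
  show "mult (\<lambda>x. a x + b x) g x = mult a g x + mult b g x"
    unfolding e1 e2 e3 by (simp add: sum.distrib distrib_right)
qed

lemma mult_neg1:
  "mult (\<lambda>x. - a x) g = (\<lambda>x. - mult a g x)"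
  unfolding mult_def supp_neg by (simp add: sum_negf)

lemma mult_add2:
  assumes "finite (supp a)" "finite (supp b)"
  shows "mult f (\<lambda>x. a x + b x) = (\<lambda>x. mult f a x + mult f b x)"
proof
  fix x
  let ?S = "supp a \<union> supp b"
  have fs: "finite ?S" using assms by simp
  let ?F = "\<lambda>w'. (\<Sum>w\<in>supp f. f w * mult_basis w w' x)"
  have e1: "mult f (\<lambda>x. a x + b x) x = (\<Sum>w\<in>?S. (a w + b w) * ?F w)"
    by (rule mult_eq2[OF fs supp_add])
  have e2: "mult f a x = (\<Sum>w\<in>?S. a w * ?F w)" by (rule mult_eq2[OF fs]) auto
  have e3: "mult f b x = (\<Sum>w\<in>?S. b w * ?F w)" by (rule mult_eq2[OF fs]) auto
  show "mult f (\<lambda>x. a x + b x) x = mult f a x + mult f b x"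
    unfolding e1 e2 e3 by (simp add: sum.distrib distrib_right)
qed

lemma mult_neg2:
  "mult f (\<lambda>x. - a x) = (\<lambda>x. - mult f a x)"
  unfolding mult_def supp_neg by (simp add: sum_negf)

lemma mult_zero1: "mult (\<lambda>_. 0) g = (\<lambda>_. 0)"
  unfolding mult_def supp_def by simp

lemma mult_zero2: "mult f (\<lambda>_. 0) = (\<lambda>_. 0)"
  unfolding mult_def supp_def by simp

lemma right_ideal:
  assumes b: "b \<in> ZS" and a: "a \<in> J_SK"
  shows "mult a b \<in> J_SK"
proof -
  have fb: "finite (supp b)" using b by (simp add: ZS_def)
  have pb: "\<And>w'. w' \<in> supp b \<Longrightarrow> is_perm w'" using b by (simp add: ZS_def supp_def)
  have "a \<in> J_SK \<Longrightarrow> mult a b \<in> J_SK"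
    unfolding J_SK_def
  proof (induction rule: zspan.induct)
    case zero then show ?case by (simp add: mult_zero1 zspan.zero)
  next
    case (gen s)
    then obtain u v where s: "s = (\<lambda>x. bas u x - bas v x)" "is_perm u" "is_perm v"
      "length u = length v" "sk_equiv u v" by blast
    have eq: "mult s b x = (\<Sum>w'\<in>supp b. b w' * (mult_basis u w' x - mult_basis v w' x))" for x
    proof (cases "u = v")
      case True
      then have "s = (\<lambda>_. 0)" using s by simp
      then show ?thesis using True by (simp add: mult_zero1)
    next
      case False
      have sup: "supp s \<subseteq> {u, v}" using s(1) supp_bas_diff by simp
      have "mult s b x = (\<Sum>w\<in>{u, v}. s w * (\<Sum>w'\<in>supp b. b w' * mult_basis w w' x))"
        by (rule mult_eq1[OF _ sup]) simp
      also have "\<dots> = (\<Sum>w'\<in>supp b. b w' * mult_basis u w' x) - (\<Sum>w'\<in>supp b. b w' * mult_basis v w' x)"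
        using False s(1) by (simp add: bas_def)
      finally show ?thesis by (simp add: sum_subtractf right_diff_distrib)
    qed
    have mem: "(\<lambda>x. \<Sum>w'\<in>supp b. b w' * (mult_basis u w' x - mult_basis v w' x)) \<in> J_SK"
    proof (rule J_SK_sum[OF fb], rule ballI)
      fix w' assume "w' \<in> supp b"
      show "(\<lambda>x. b w' * (mult_basis u w' x - mult_basis v w' x)) \<in> J_SK"
        by (rule J_SK_smult[OF mb_right[OF s(2,3,4,5)]])
    qed
    have "mult s b = (\<lambda>x. \<Sum>w'\<in>supp b. b w' * (mult_basis u w' x - mult_basis v w' x))"
      by (rule ext) (rule eq)
    then have "mult s b \<in> J_SK" using mem by simp
    then show ?case unfolding J_SK_def .
  next
    case (add a1 a2)
    have "finite (supp a1)" "finite (supp a2)" using add.hyps J_SK_fin unfolding J_SK_def by blast+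
    then have "mult (\<lambda>x. a1 x + a2 x) b = (\<lambda>x. mult a1 b x + mult a2 b x)" by (rule mult_add1)
    then show ?case using zspan.add[OF add.IH] by simp
  next
    case (neg a1)
    then show ?case using zspan.neg[OF neg.IH] by (simp add: mult_neg1)
  qed
  then show ?thesis using a by simp
qed

lemma left_ideal_K:
  assumes a: "a \<in> ZS" and b: "b \<in> J_K"
  shows "mult a b \<in> J_SK"
proof -
  have fa: "finite (supp a)" using a by (simp add: ZS_def)
  have "b \<in> J_K \<Longrightarrow> mult a b \<in> J_SK"
    unfolding J_K_def
  proof (induction rule: zspan.induct)
    case zero then show ?case by (simp add: mult_zero2 J_SK_def zspan.zero)
  next
    case (gen s)
    then obtain u v where s: "s = (\<lambda>x. bas u x - bas v x)" "is_perm u" "is_perm v"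
      "length u = length v" "knuth_equiv u v" by blast
    have eq: "mult a s x = (\<Sum>w\<in>supp a. a w * (mult_basis w u x - mult_basis w v x))" for x
    proof (cases "u = v")
      case True
      then have "s = (\<lambda>_. 0)" using s by simp
      then show ?thesis using True by (simp add: mult_zero2)
    next
      case False
      have sup: "supp s \<subseteq> {u, v}" using s(1) supp_bas_diff by simp
      have "mult a s x = (\<Sum>w'\<in>{u, v}. s w' * (\<Sum>w\<in>supp a. a w * mult_basis w w' x))"
        by (rule mult_eq2[OF _ sup]) simp
      also have "\<dots> = (\<Sum>w\<in>supp a. a w * mult_basis w u x) - (\<Sum>w\<in>supp a. a w * mult_basis w v x)"
        using False s(1) by (simp add: bas_def)
      finally show ?thesis by (simp add: sum_subtractf right_diff_distrib)
    qed
    have mem: "(\<lambda>x. \<Sum>w\<in>supp a. a w * (mult_basis w u x - mult_basis w v x)) \<in> J_SK"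
    proof (rule J_SK_sum[OF fa], rule ballI)
      fix w assume "w \<in> supp a"
      show "(\<lambda>x. a w * (mult_basis w u x - mult_basis w v x)) \<in> J_SK"
        by (rule J_SK_smult[OF mb_left[OF s(2,3,4,5)]])
    qed
    have "mult a s = (\<lambda>x. \<Sum>w\<in>supp a. a w * (mult_basis w u x - mult_basis w v x))"
      by (rule ext) (rule eq)
    then show "mult a s \<in> J_SK" using mem by simp
  next
    case (add b1 b2)
    have "finite (supp b1)" "finite (supp b2)" using add.hyps J_K_fin unfolding J_K_def by blast+
    then have "mult a (\<lambda>x. b1 x + b2 x) = (\<lambda>x. mult a b1 x + mult a b2 x)" by (rule mult_add2)
    then show ?case using add.IH unfolding J_SK_def using zspan.add by simp
  next
    case (neg b1)
    then show ?case using neg.IH unfolding J_SK_def using zspan.neg by (simp add: mult_neg2)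
  qed
  then show ?thesis using b by simp
qed



definition Tsp :: "(nat list \<times> nat list \<Rightarrow> int) set" where
  "Tsp = zspan ({tensor j b | j b. j \<in> J_SK \<and> b \<in> ZS} \<union> {tensor b j | j b. j \<in> J_SK \<and> b \<in> ZS})"

lemma bas_ZS: "is_perm w \<Longrightarrow> bas w \<in> ZS"
  unfolding ZS_def supp_def bas_def by auto

lemma tensor_bas: "tensor (bas a) (bas b) p = (if p = (a, b) then 1 else 0)"
  by (cases p) (simp add: tensor_def bas_def)

lemma cb_eq: "coprod_basis w p = (\<Sum>i\<in>{0..length w}.
    tensor (bas (st (restr w {1..i}))) (bas (st (restr w {i+1..length w}))) p)"
  unfolding coprod_basis_def tensor_bas by simp

lemma restr_step:
  assumes "shifted_step m v"
  shows "\<exists>x z. x \<noteq> z \<and> (\<forall>lo hi. (x \<in> {lo..hi} \<and> z \<in> {lo..hi} \<longrightarrow>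
      restr m {lo..hi} = restr v {lo..hi} \<or> shifted_step (restr m {lo..hi}) (restr v {lo..hi})) \<and>
      (\<not> (x \<in> {lo..hi} \<and> z \<in> {lo..hi}) \<longrightarrow> restr m {lo..hi} = restr v {lo..hi}))"
proof -
  consider (k) "knuth_step m v" | (s) x y c where "m = x # y # c" "v = y # x # c"
    using assms unfolding shifted_step_def by blast
  then show ?thesis
  proof cases
    case k
    then obtain a b x y z where xyz: "x < y" "y < z" and
      cc: "(m = a @ [x, z, y] @ b \<and> v = a @ [z, x, y] @ b) \<or>
       (m = a @ [y, x, z] @ b \<and> v = a @ [y, z, x] @ b)"
      unfolding knuth_step_def by blast
    show ?thesis
    proof (rule exI[of _ x], rule exI[of _ z], intro conjI allI impI)
      show "x \<noteq> z" using xyz by simp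
    next
      fix lo hi assume in2: "x \<in> {lo..hi} \<and> z \<in> {lo..hi}"
      then have yin: "y \<in> {lo..hi}" using xyz by auto
      let ?P = "\<lambda>t. t \<in> {lo..hi}"
      have "knuth_step (restr m {lo..hi}) (restr v {lo..hi})"
        unfolding knuth_step_def restr_def
        by (rule exI[of _ "filter ?P a"], rule exI[of _ "filter ?P b"], rule exI[of _ x],
            rule exI[of _ y], rule exI[of _ z]) (use cc xyz in2 yin in auto)
      then show "restr m {lo..hi} = restr v {lo..hi} \<or> shifted_step (restr m {lo..hi}) (restr v {lo..hi})"
        by (simp add: shifted_step_def)
    next
      fix lo hi assume "\<not> (x \<in> {lo..hi} \<and> z \<in> {lo..hi})"
      then show "restr m {lo..hi} = restr v {lo..hi}"
        using cc unfolding restr_def by auto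
    qed
  next
    case s
    show ?thesis
    proof (cases "x = y")
      case True
      then have "m = v" using s by simp
      then show ?thesis by (intro exI[of _ "0::nat"] exI[of _ "1::nat"]) auto
    next
      case False
      show ?thesis
      proof (rule exI[of _ x], rule exI[of _ y], intro conjI allI impI)
        show "x \<noteq> y" by (rule False)
      next
        fix lo hi assume in2: "x \<in> {lo..hi} \<and> y \<in> {lo..hi}"
        have "shifted_step (restr m {lo..hi}) (restr v {lo..hi})"
          unfolding shifted_step_def restr_def using s in2 by auto
        then show "restr m {lo..hi} = restr v {lo..hi} \<or> shifted_step (restr m {lo..hi}) (restr v {lo..hi})"
          by simp
      next
        fix lo hi assume "\<not> (x \<in> {lo..hi} \<and> y \<in> {lo..hi})"
        then show "restr m {lo..hi} = restr v {lo..hi}"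
          using s unfolding restr_def by auto
      qed
    qed
  qed
qed

lemma st_step:
  assumes st: "s = t \<or> shifted_step s t" and d: "distinct s"
  shows "sk_equiv (st s) (st t) \<and> length (st s) = length (st t) \<and> is_perm (st s) \<and> is_perm (st t)"
proof (cases "s = t")
  case True then show ?thesis using d st_is_perm by (simp add: sk_equiv_def)
next
  case False
  then have step: "shifted_step s t" using st by simp
  note pr = shifted_step_props[OF step]
  have dt: "distinct t" using pr d by simp
  let ?h = "\<lambda>a. Suc (rank (set s) a)"
  have mono: "\<forall>a\<in>set s. \<forall>b\<in>set s. a < b \<longrightarrow> ?h a < ?h b"
    using rank_strict[of "set s"] by auto
  have "shifted_step (map ?h s) (map ?h t)" by (rule shifted_step_map[OF step mono])
  moreover have "st s = map ?h s" using d by (rule st_distinct)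
  moreover have "st t = map ?h t" using dt pr by (simp add: st_distinct)
  ultimately have "sk_equiv (st s) (st t)" unfolding sk_equiv_def by auto
  moreover have "is_perm (st s)" "is_perm (st t)" using d dt st_is_perm by auto
  ultimately show ?thesis using pr by simp
qed

lemma term_mem1:
  assumes "is_perm A" "is_perm B" "is_perm B'" "length B = length B'" "sk_equiv B B'"
  shows "(\<lambda>p. tensor (bas A) (bas B) p - tensor (bas A) (bas B') p) \<in> Tsp"
proof -
  have j: "(\<lambda>y. bas B y - bas B' y) \<in> J_SK" by (rule gen_J_SK) (use assms in auto)
  have "tensor (bas A) (\<lambda>y. bas B y - bas B' y) \<in> Tsp"
    unfolding Tsp_def by (rule zspan.gen) (use j bas_ZS[OF assms(1)] in blast)
  moreover have "tensor (bas A) (\<lambda>y. bas B y - bas B' y) = (\<lambda>p. tensor (bas A) (bas B) p - tensor (bas A) (bas B') p)"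
    by (rule ext) (auto simp: tensor_def right_diff_distrib)
  ultimately show ?thesis by simp
qed

lemma term_mem2:
  assumes "is_perm B" "is_perm A" "is_perm A'" "length A = length A'" "sk_equiv A A'"
  shows "(\<lambda>p. tensor (bas A) (bas B) p - tensor (bas A') (bas B) p) \<in> Tsp"
proof -
  have j: "(\<lambda>y. bas A y - bas A' y) \<in> J_SK" by (rule gen_J_SK) (use assms in auto)
  have "tensor (\<lambda>y. bas A y - bas A' y) (bas B) \<in> Tsp"
    unfolding Tsp_def by (rule zspan.gen) (use j bas_ZS[OF assms(1)] in blast)
  moreover have "tensor (\<lambda>y. bas A y - bas A' y) (bas B) = (\<lambda>p. tensor (bas A) (bas B) p - tensor (bas A') (bas B) p)"
    by (rule ext) (auto simp: tensor_def left_diff_distrib)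
  ultimately show ?thesis by simp
qed

lemma cb_step:
  assumes step: "shifted_step m v" and pm: "is_perm m"
  shows "(\<lambda>p. coprod_basis m p - coprod_basis v p) \<in> Tsp"
proof -
  note pr = shifted_step_props[OF step]
  define n where "n = length m"
  have lv: "length v = n" using pr n_def by simp
  have dm: "distinct m" using pm by (simp add: is_perm_def)
  obtain x z where xz: "x \<noteq> z" and R: "\<And>lo hi. (x \<in> {lo..hi} \<and> z \<in> {lo..hi} \<longrightarrow>
      restr m {lo..hi} = restr v {lo..hi} \<or> shifted_step (restr m {lo..hi}) (restr v {lo..hi})) \<and>
      (\<not> (x \<in> {lo..hi} \<and> z \<in> {lo..hi}) \<longrightarrow> restr m {lo..hi} = restr v {lo..hi})"
    using restr_step[OF step] by blast
  have Rs: "restr m {lo..hi} = restr v {lo..hi} \<or> shifted_step (restr m {lo..hi}) (restr v {lo..hi})" for lo hi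
    using R[of lo hi] by blast
  have dr: "distinct (restr m I)" for I using dm by (simp add: restr_def)
  have trm: "(\<lambda>p. tensor (bas (st (restr m {1..i}))) (bas (st (restr m {i+1..n}))) p
        - tensor (bas (st (restr v {1..i}))) (bas (st (restr v {i+1..n}))) p) \<in> Tsp" for i
  proof -
    have S1: "sk_equiv (st (restr m {1..i})) (st (restr v {1..i})) \<and> length (st (restr m {1..i})) = length (st (restr v {1..i}))
       \<and> is_perm (st (restr m {1..i})) \<and> is_perm (st (restr v {1..i}))"
      by (rule st_step[OF Rs dr])
    have S2: "sk_equiv (st (restr m {i+1..n})) (st (restr v {i+1..n})) \<and> length (st (restr m {i+1..n})) = length (st (restr v {i+1..n}))
       \<and> is_perm (st (restr m {i+1..n})) \<and> is_perm (st (restr v {i+1..n}))"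
      by (rule st_step[OF Rs dr])
    have "\<not> (x \<in> {1..i} \<and> z \<in> {1..i} \<and> x \<in> {i+1..n} \<and> z \<in> {i+1..n})" by auto
    then have "restr m {1..i} = restr v {1..i} \<or> restr m {i+1..n} = restr v {i+1..n}"
      using R[of 1 i] R[of "i+1" n] by blast
    then show ?thesis
    proof
      assume e: "restr m {1..i} = restr v {1..i}"
      show ?thesis using term_mem1[of "st (restr m {1..i})" "st (restr m {i+1..n})" "st (restr v {i+1..n})"] S1 S2 e
        by simp
    next
      assume e: "restr m {i+1..n} = restr v {i+1..n}"
      show ?thesis using term_mem2[of "st (restr m {i+1..n})" "st (restr m {1..i})" "st (restr v {1..i})"] S1 S2 e
        by simp
    qed
  qed
  have "(\<lambda>p. \<Sum>i\<in>{0..n}. tensor (bas (st (restr m {1..i}))) (bas (st (restr m {i+1..n}))) p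
        - tensor (bas (st (restr v {1..i}))) (bas (st (restr v {i+1..n}))) p) \<in> Tsp"
    unfolding Tsp_def by (rule zspan_sum) (use trm in \<open>auto simp: Tsp_def\<close>)
  moreover have "(\<lambda>p. coprod_basis m p - coprod_basis v p) = (\<lambda>p. \<Sum>i\<in>{0..n}. tensor (bas (st (restr m {1..i}))) (bas (st (restr m {i+1..n}))) p
        - tensor (bas (st (restr v {1..i}))) (bas (st (restr v {i+1..n}))) p)"
    by (rule ext) (simp only: cb_eq n_def[symmetric] lv sum_subtractf)
  ultimately show ?thesis by simp
qed

lemma Tsp_add: "a \<in> Tsp \<Longrightarrow> b \<in> Tsp \<Longrightarrow> (\<lambda>x. a x + b x) \<in> Tsp"
  unfolding Tsp_def by (rule zspan.add)

lemma Tsp_neg: "a \<in> Tsp \<Longrightarrow> (\<lambda>x. - a x) \<in> Tsp"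
  unfolding Tsp_def by (rule zspan.neg)

lemma cb_chain:
  assumes "sk_equiv u v" "is_perm u"
  shows "(\<lambda>p. coprod_basis u p - coprod_basis v p) \<in> Tsp"
proof -
  have "equivclp shifted_step u v" using assms(1) by (simp add: sk_equiv_def)
  then have "(\<lambda>p. coprod_basis u p - coprod_basis v p) \<in> Tsp \<and> is_perm v"
  proof (induction rule: equivclp_induct)
    case base then show ?case using assms(2) by (simp add: Tsp_def zspan.zero)
  next
    case (step y z)
    then have IH: "(\<lambda>p. coprod_basis u p - coprod_basis y p) \<in> Tsp" and py: "is_perm y" by auto
    have eqz: "(\<lambda>p. coprod_basis u p - coprod_basis z p) =
        (\<lambda>p. (\<lambda>p. coprod_basis u p - coprod_basis y p) p + (\<lambda>p. coprod_basis y p - coprod_basis z p) p)"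
      by (rule ext) simp
    show ?case
    proof (cases "shifted_step y z")
      case True
      note pr = shifted_step_props[OF True]
      have pz: "is_perm z" using py pr by (simp add: is_perm_def)
      have "(\<lambda>p. coprod_basis y p - coprod_basis z p) \<in> Tsp" by (rule cb_step[OF True py])
      then have "(\<lambda>p. (\<lambda>p. coprod_basis u p - coprod_basis y p) p + (\<lambda>p. coprod_basis y p - coprod_basis z p) p) \<in> Tsp"
        by (rule Tsp_add[OF IH])
      then have "(\<lambda>p. coprod_basis u p - coprod_basis z p) \<in> Tsp" unfolding eqz .
      then show ?thesis using pz by blast
    next
      case False
      then have st: "shifted_step z y" using step by simp
      note pr = shifted_step_props[OF st]
      have pz: "is_perm z" using py pr by (simp add: is_perm_def)
      have "(\<lambda>p. - (coprod_basis z p - coprod_basis y p)) \<in> Tsp" by (rule Tsp_neg[OF cb_step[OF st pz]])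
      then have "(\<lambda>p. coprod_basis y p - coprod_basis z p) \<in> Tsp" by simp
      then have "(\<lambda>p. (\<lambda>p. coprod_basis u p - coprod_basis y p) p + (\<lambda>p. coprod_basis y p - coprod_basis z p) p) \<in> Tsp"
        by (rule Tsp_add[OF IH])
      then have "(\<lambda>p. coprod_basis u p - coprod_basis z p) \<in> Tsp" unfolding eqz .
      then show ?thesis using pz by blast
    qed
  qed
  then show ?thesis by simp
qed

lemma coprod_eq:
  assumes "finite S" "supp f \<subseteq> S"
  shows "coprod f p = (\<Sum>w\<in>S. f w * coprod_basis w p)"
  unfolding coprod_def by (rule sum_supp[OF assms])

lemma coideal:
  assumes a: "a \<in> J_SK"
  shows "coprod a \<in> Tsp \<and> counit a = 0"
proof -
  have "a \<in> J_SK \<Longrightarrow> coprod a \<in> Tsp \<and> counit a = 0"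
    unfolding J_SK_def
  proof (induction rule: zspan.induct)
    case zero
    have "coprod (\<lambda>_. 0) = (\<lambda>_. 0)" unfolding coprod_def supp_def by simp
    then show ?case by (simp add: Tsp_def zspan.zero counit_def)
  next
    case (gen s)
    then obtain u v where s: "s = (\<lambda>x. bas u x - bas v x)" "is_perm u" "is_perm v"
      "length u = length v" "sk_equiv u v" by blast
    have cu: "counit s = 0" using s by (auto simp: counit_def bas_def)
    have eq: "coprod s p = coprod_basis u p - coprod_basis v p" for p
    proof (cases "u = v")
      case True
      then have "s = (\<lambda>_. 0)" using s by simp
      then show ?thesis using True unfolding coprod_def supp_def by simp
    next
      case False
      have sup: "supp s \<subseteq> {u, v}" using s(1) supp_bas_diff by simp
      have "coprod s p = (\<Sum>w\<in>{u, v}. s w * coprod_basis w p)"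
        by (rule coprod_eq[OF _ sup]) simp
      then show ?thesis using False s(1) by (simp add: bas_def)
    qed
    have "coprod s = (\<lambda>p. coprod_basis u p - coprod_basis v p)" by (rule ext) (rule eq)
    then show ?case using cb_chain[OF s(5,2)] cu by simp
  next
    case (add a1 a2)
    have f: "finite (supp a1 \<union> supp a2)" using add.hyps J_SK_fin unfolding J_SK_def by blast
    have "coprod (\<lambda>x. a1 x + a2 x) p = coprod a1 p + coprod a2 p" for p
    proof -
      have e1: "coprod (\<lambda>x. a1 x + a2 x) p = (\<Sum>w\<in>supp a1 \<union> supp a2. (a1 w + a2 w) * coprod_basis w p)"
        by (rule coprod_eq[OF f supp_add])
      have e2: "coprod a1 p = (\<Sum>w\<in>supp a1 \<union> supp a2. a1 w * coprod_basis w p)"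
        by (rule coprod_eq[OF f]) auto
      have e3: "coprod a2 p = (\<Sum>w\<in>supp a1 \<union> supp a2. a2 w * coprod_basis w p)"
        by (rule coprod_eq[OF f]) auto
      show ?thesis unfolding e1 e2 e3 by (simp add: sum.distrib distrib_right)
    qed
    then have "coprod (\<lambda>x. a1 x + a2 x) = (\<lambda>p. coprod a1 p + coprod a2 p)" by (rule ext)
    then show ?case using add.IH Tsp_add[of "coprod a1" "coprod a2"] by (simp add: counit_def)
  next
    case (neg a1)
    have "coprod (\<lambda>x. - a1 x) = (\<lambda>p. - coprod a1 p)"
      unfolding coprod_def supp_neg by (simp add: sum_negf)
    then show ?case using neg.IH Tsp_neg[of "coprod a1"] by (simp add: counit_def)
  qed
  then show ?thesis using a by simp
qed

theorem theorem4p1: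
  shows "(\<forall>a\<in>J_SK. \<forall>b\<in>ZS. mult a b \<in> J_SK)
       \<and> (\<forall>a\<in>J_SK. coprod a \<in> zspan ({tensor j b | j b. j \<in> J_SK \<and> b \<in> ZS}
                                        \<union> {tensor b j | j b. j \<in> J_SK \<and> b \<in> ZS})
                  \<and> counit a = 0)
       \<and> (\<forall>a\<in>ZS. \<forall>b\<in>J_K. mult a b \<in> J_SK)"
  using right_ideal coideal left_ideal_K unfolding Tsp_def by blast

end
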